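(* Let $n\in\mathbb{N}$ and $\beta>1$. Then $R_{\mathcal{S}^*_{Ne,n}}(\mathcal{M}_n(\beta))=(3\beta-2)^{-1/n}$, and the result is sharp for $f(z)=z(1-z^n)^{2(\beta-1)/n}$.
   Context: $\mathbb{D}=\{|z|<1\}$, $\mathbb{D}_r=\{|z|<r\}$. For $n\in\mathbb{N}$, $\mathcal{A}_n$ is the class of analytic functions on $\mathbb{D}$ of the form $f(z)=z+\sum_{k\ge n+1}a_kz^k$; for such $f$ let $\mathcal{Q}_f(z)=zf'(z)/f(z)$. For $\beta>1$, $\mathcal{M}_n(\beta)=\{f\in\mathcal{A}_n:\mathrm{Re}\,\mathcal{Q}_f(z)<\beta,\ z\in\mathbb{D}\}$ (equivalently $\mathcal{Q}_f\prec\frac{1+(1-2\beta)z^n}{1-z^n}$). Let $\varphi_{Ne}(z)=1+z-z^3/3$ (univalent on $\mathbb{D}$), $\Omega_{Ne}=\varphi_{Ne}(\mathbb{D})$, $\mathcal{S}^*_{Ne}$ the set of $f$ ($f(0)=0,f'(0)=1$) with $\mathcal{Q}_f\prec\varphi_{Ne}$ (subordination: $\mathcal{Q}_f=\varphi_{Ne}\circ w$, $w:\mathbb{D}\to\mathbb{D}$ analytic, $w(0)=0$), $\mathcal{S}^*_{Ne,n}=\mathcal{S}^*_{Ne}\cap\mathcal{A}_n$. For $\mathcal{G}\subset\mathcal{A}_n$, $R_{\mathcal{S}^*_{Ne,n}}(\mathcal{G})$ is the largest $\rho\in(0,1]$ such that $\mathcal{Q}_f(\mathbb{D}_\rho)\subseteq\Omega_{Ne}$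 for all $f\in\mathcal{G}$. Sharpness means the stated $f$ lies in $\mathcal{M}_n(\beta)$ and $\mathcal{Q}_f(\partial\mathbb{D}_\rho)\cap\partial\Omega_{Ne}\ne\emptyset$. *)

theory Defs
  imports "HOL-Analysis.Analysis"
begin

definition A_class :: "nat \<Rightarrow> (complex \<Rightarrow> complex) set" where
  "A_class n = {f. f holomorphic_on ball 0 1 \<and>
     (\<exists>a::nat \<Rightarrow> complex. a 0 = 0 \<and> a 1 = 1 \<and> (\<forall>k. 2 \<le> k \<and> k \<le> n \<longrightarrow> a k = 0) \<and>
        (\<forall>z \<in> ball 0 1. (\<lambda>k. a k * z ^ k) sums f z))}"

text \<open>Q_f z = z f'(z) / f(z), with its removable value 1 at the origin.\<close>
definition Qf :: "(complex \<Rightarrow> complex) \<Rightarrow> complex \<Rightarrow> complex" where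
  "Qf f z = (if z = 0 then 1 else z * deriv f z / f z)"

definition M_class :: "nat \<Rightarrow> real \<Rightarrow> (complex \<Rightarrow> complex) set" where
  "M_class n \<beta> = {f \<in> A_class n. (\<forall>z \<in> ball 0 1. z \<noteq> 0 \<longrightarrow> f z \<noteq> 0) \<and>
                     (\<forall>z \<in> ball 0 1. Re (Qf f z) < \<beta>)}"

definition phiNe :: "complex \<Rightarrow> complex" where
  "phiNe z = 1 + z - z ^ 3 / 3"

definition OmegaNe :: "complex set" where
  "OmegaNe = phiNe ` ball 0 1"

definition radius_Ne :: "(complex \<Rightarrow> complex) set \<Rightarrow> real" where
  "radius_Ne G = (GREATEST \<rho>. \<rho> \<in> {0<..1} \<and> (\<forall>f \<in> G. Qf f ` ball 0 \<rho> \<subseteq> OmegaNe))"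

end

theory Submission
  imports Defs "HOL-Complex_Analysis.Complex_Analysis"
begin

lemma A_factor:
  assumes "f \<in> A_class n" "n \<ge> 1"
  obtains G where "G holomorphic_on ball 0 1" "\<forall>z\<in>ball 0 1. f z = z + z^(n+1) * G z"
proof -
  obtain a where a0: "a 0 = 0" and a1: "a 1 = 1" and ak: "\<forall>k. 2 \<le> k \<and> k \<le> n \<longrightarrow> a k = 0"
    and as: "\<forall>z \<in> ball 0 1. (\<lambda>k. a k * z ^ k) sums f z"
    using assms(1) unfolding A_class_def by blast
  define c where "c k = a (k+(n+1))" for k
  have summ: "summable (\<lambda>k. c k * z^k)" if "norm z < 1" for z :: complex
  proof (cases "z = 0")
    case True
    then show ?thesis by (simp add: summable_0_powser)
  next
    case False
    have "(\<lambda>k. a k * z^k) sums f z" using as that by (auto simp: dist_norm)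
    hence "summable (\<lambda>k. a k * z^k)" by (rule sums_summable)
    hence s: "summable (\<lambda>k. a (k + (n+1)) * z^(k+(n+1)))"
      by (rule summable_ignore_initial_segment)
    have "summable (\<lambda>k. (a (k + (n+1)) * z^(k+(n+1))) * (1 / z^(n+1)))"
      using summable_mult2[OF s] by blast
    moreover have "(\<lambda>k. (a (k + (n+1)) * z^(k+(n+1))) * (1 / z^(n+1))) = (\<lambda>k. c k * z^k)"
      using False by (auto simp: c_def power_add field_simps)
    ultimately show ?thesis by simp
  qed
  define G where "G z = (\<Sum>k. c k * z^k)" for z
  have "G holomorphic_on ball 0 1"
    unfolding holomorphic_on_open[OF open_ball] G_def
    using termdiffs_strong'[of 1 c] summ by (metis dist_0_norm mem_ball)
  moreover have "\<forall>z\<in>ball 0 1. f z = z + z^(n+1) * G z"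
  proof
    fix z :: complex assume z: "z \<in> ball 0 1"
    have s1: "(\<lambda>k. a k * z ^ k) sums f z" using as z by auto
    have s2: "(\<lambda>i. a (i + (n+1)) * z ^ (i + (n+1))) sums (f z - (\<Sum>i<n+1. a i * z^i))"
      using s1 sums_iff_shift[of "\<lambda>k. a k * z ^ k" "n+1"] by simp
    have "(\<Sum>i<n+1. a i * z^i) = (\<Sum>i<n+1. (if i = 1 then z else 0))"
    proof (rule sum.cong)
      fix i assume "i \<in> {..<n+1}"
      then show "a i * z^i = (if i = 1 then z else 0)"
        using a0 a1 ak by (cases "i = 0"; cases "i = 1"; auto)
    qed simp
    also have "\<dots> = z" using assms(2) by (simp add: sum.delta)
    finally have e1: "(\<Sum>i<n+1. a i * z^i) = z" .
    have s3: "(\<lambda>i. z^(n+1) * (c i * z^i)) sums (z^(n+1) * G z)"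
      unfolding G_def using summ[of z] z by (intro sums_mult summable_sums) auto
    have "(\<lambda>i. z^(n+1) * (c i * z^i)) = (\<lambda>i. a (i + (n+1)) * z ^ (i + (n+1)))"
      by (auto simp: c_def power_add)
    with s2 s3 e1 have "f z - z = z^(n+1) * G z" using sums_unique2 by metis
    then show "f z = z + z^(n+1) * G z" by (simp add: algebra_simps)
  qed
  ultimately show ?thesis using that by blast
qed

lemma Qf_factor:
  assumes "f \<in> M_class n \<beta>" "n \<ge> 1"
  obtains K where "K holomorphic_on ball 0 1" "\<forall>z\<in>ball 0 1. Qf f z = 1 + z^n * K z"
proof -
  have fA: "f \<in> A_class n" and nz: "\<forall>z \<in> ball 0 1. z \<noteq> 0 \<longrightarrow> f z \<noteq> 0"
    using assms(1) unfolding M_class_def by auto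
  obtain G where G: "G holomorphic_on ball 0 1" and fG: "\<forall>z\<in>ball 0 1. f z = z + z^(n+1) * G z"
    using A_factor[OF fA assms(2)] by blast
  define g where "g z = 1 + z^n * G z" for z
  have fg: "f z = z * g z" if "z \<in> ball 0 1" for z
    using fG that by (simp add: g_def algebra_simps)
  have gnz: "g z \<noteq> 0" if "z \<in> ball 0 1" for z
  proof (cases "z = 0")
    case True then show ?thesis using assms(2) by (simp add: g_def power_0_left)
  next
    case False then show ?thesis using nz fg that by fastforce
  qed
  have dG: "(G has_field_derivative deriv G z) (at z)" if "z \<in> ball 0 1" for z
    using holomorphic_derivI[OF G open_ball that] .
  have dg: "(g has_field_derivative (of_nat n * z^(n-1) * G z + z^n * deriv G z)) (at z)"
    if "z \<in> ball 0 1" for z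
    unfolding g_def[abs_def] using dG[OF that]
    by (auto intro!: derivative_eq_intros)
  have df: "(f has_field_derivative (g z + z * (of_nat n * z^(n-1) * G z + z^n * deriv G z))) (at z)"
    if z: "z \<in> ball 0 1" for z
  proof (rule has_field_derivative_transform_within_open[OF _ open_ball z])
    show "((\<lambda>z. z * g z) has_field_derivative (g z + z * (of_nat n * z^(n-1) * G z + z^n * deriv G z))) (at z)"
      using dg[OF z] by (auto intro!: derivative_eq_intros)
    show "\<And>x. x \<in> ball 0 1 \<Longrightarrow> x * g x = f x" using fg by simp
  qed
  define K where "K z = (of_nat n * G z + z * deriv G z) / g z" for z
  have "K holomorphic_on ball 0 1"
    unfolding K_def[abs_def] g_def[abs_def]
    using G gnz unfolding g_def
    by (intro holomorphic_intros holomorphic_deriv) auto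
  moreover have "\<forall>z\<in>ball 0 1. Qf f z = 1 + z^n * K z"
  proof
    fix z :: complex assume z: "z \<in> ball 0 1"
    show "Qf f z = 1 + z^n * K z"
    proof (cases "z = 0")
      case True then show ?thesis using assms(2) by (simp add: Qf_def)
    next
      case False
      have e: "z * z^(n-1) = z^n" using assms(2) by (metis Suc_diff_le diff_Suc_1 power_Suc)
      have "deriv f z = g z + z * (of_nat n * z^(n-1) * G z + z^n * deriv G z)"
        using df[OF z] by (rule DERIV_imp_deriv)
      then have "Qf f z = z * (g z + z * (of_nat n * z^(n-1) * G z + z^n * deriv G z)) / (z * g z)"
        using False fg[OF z] by (simp add: Qf_def)
      also have "\<dots> = 1 + z^n * K z"
        using False gnz[OF z] e unfolding K_def
        by (simp add: field_simps)
      finally show ?thesis .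
    qed
  qed
  ultimately show ?thesis using that by blast
qed

lemma half_plane_norm:
  fixes q :: complex and b :: real
  assumes "b > 0" "Re q < b / 2"
  shows "norm q < norm (complex_of_real b - q)"
proof -
  have "(norm q)^2 < (norm (complex_of_real b - q))^2"
    unfolding cmod_power2 using assms by (simp add: power2_eq_square algebra_simps)
  then show ?thesis by (simp add: power_less_imp_less_base)
qed

lemma le_one_from_powers:
  fixes c :: real
  assumes "\<And>s. a < s \<Longrightarrow> s < 1 \<Longrightarrow> c * s^n \<le> 1" "a < 1"
  shows "c \<le> 1"
proof -
  have "((\<lambda>s. c * s^n) \<longlongrightarrow> c * 1^n) (at_left (1::real))"
    by (intro tendsto_intros)
  moreover have "eventually (\<lambda>s. c * s^n \<le> 1) (at_left (1::real))"
    using eventually_at_left_real[OF assms(2)] by eventually_elim (use assms(1) in auto)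
  ultimately show ?thesis
    by (intro tendsto_upperbound[where F="at_left (1::real)"]) auto
qed

lemma M_bound:
  assumes "f \<in> M_class n \<beta>" "n \<ge> 1" "\<beta> > 1" "z \<in> ball 0 1"
  shows "norm (Qf f z - 1) * (1 - norm z ^ n) \<le> (2*\<beta>-2) * norm z ^ n"
proof -
  obtain K where K: "K holomorphic_on ball 0 1" and QK: "\<forall>z\<in>ball 0 1. Qf f z = 1 + z^n * K z"
    using Qf_factor[OF assms(1,2)] by blast
  have Re: "Re (Qf f z) < \<beta>" if "z \<in> ball 0 1" for z
    using assms(1) that unfolding M_class_def by auto
  define D where "D z = complex_of_real (2*\<beta>-2) - z^n * K z" for z
  have lt: "norm (z^n * K z) < norm (D z)" if "z \<in> ball 0 1" for z
    unfolding D_def using Re[OF that] QK that assms(3)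
    by (intro half_plane_norm) auto
  have Dnz: "D z \<noteq> 0" if "z \<in> ball 0 1" for z
    using lt[OF that] by auto
  define \<psi> where "\<psi> z = K z / D z" for z
  have hol: "\<psi> holomorphic_on ball 0 1"
    unfolding \<psi>_def[abs_def] D_def[abs_def] using K Dnz unfolding D_def
    by (intro holomorphic_intros) auto
  have psi1: "norm (\<psi> z) \<le> 1"
  proof (rule le_one_from_powers[of "norm z"])
    show "norm z < 1" using assms(4) by simp
    fix s :: real assume s: "norm z < s" "s < 1"
    have s0: "s > 0" using s(1) norm_ge_zero[of z] by linarith
    have sub: "cball 0 s \<subseteq> ball (0::complex) 1" using s by auto
    have "norm (\<psi> z) \<le> 1 / s^n"
    proof (rule maximum_modulus_frontier[of \<psi> "cball 0 s"])
      show "\<psi> holomorphic_on interior (cball 0 s)"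
        using holomorphic_on_subset[OF hol, of "ball 0 s"] s by (auto simp: subset_ball)
      show "continuous_on (closure (cball 0 s)) \<psi>"
        using holomorphic_on_imp_continuous_on[OF hol] sub
        by (auto intro: continuous_on_subset)
      show "bounded (cball (0::complex) s)" by simp
      show "z \<in> cball 0 s" using s by simp
      fix w :: complex assume w: "w \<in> frontier (cball 0 s)"
      then have nw: "norm w = s" by simp
      have wb: "w \<in> ball 0 1" using nw s by simp
      have "norm (w^n * K w) < norm (D w)" using lt[OF wb] .
      then have "s^n * norm (K w) < norm (D w)" by (simp add: norm_mult norm_power nw)
      then have "norm (K w) / norm (D w) < 1 / s^n"
        using Dnz[OF wb] s0 by (simp add: field_simps)
      then show "norm (\<psi> w) \<le> 1 / s^n" by (simp add: \<psi>_def norm_divide)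
    qed
    then show "norm (\<psi> z) * s^n \<le> 1" using s0 by (simp add: field_simps)
  qed
  define q where "q = z^n * K z"
  have qQ: "Qf f z - 1 = q" using QK assms(4) by (simp add: q_def)
  have "norm q = norm z ^ n * norm (\<psi> z) * norm (D z)"
    using Dnz[OF assms(4)] by (simp add: q_def \<psi>_def norm_mult norm_power norm_divide)
  also have "\<dots> \<le> norm z ^ n * norm (D z)"
    using psi1 mult_left_le[of "norm (\<psi> z)" "norm z ^ n * norm (D z)"]
    by (simp add: mult_ac)
  also have "norm (D z) \<le> (2*\<beta>-2) + norm q"
  proof -
    have nb: "norm (complex_of_real (2*\<beta>-2)) = 2*\<beta>-2" using assms(3) by (simp only: norm_of_real)
    show ?thesis
      unfolding D_def q_def[symmetric] using norm_triangle_ineq4[of "complex_of_real (2*\<beta>-2)" q] nb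
      by linarith
  qed
  finally have "norm q \<le> norm z ^ n * ((2*\<beta>-2) + norm q)"
    by (simp add: mult_left_mono)
  then show ?thesis using qQ by (simp add: algebra_simps)
qed

lemma disk_in_Omega:
  fixes c :: complex
  assumes "norm c < 2/3"
  shows "1 + c \<in> OmegaNe"
proof (cases "c = 0")
  case True
  have "phiNe 0 = 1" by (simp add: phiNe_def)
  then show ?thesis using True unfolding OmegaNe_def by (metis add.right_neutral centre_in_ball image_eqI zero_less_one)
next
  case False
  define R where "R = 3/2 * norm c"
  have R0: "R > 0" using False by (simp add: R_def)
  have R1: "R < 1" using assms by (simp add: R_def)
  have key: "norm c + R^3/3 \<le> R"
  proof -
    have "norm c * norm c \<le> (2/3) * (2/3)"
      by (rule mult_mono) (use assms in auto)
    then have "norm c * (norm c)^2 \<le> norm c * (4/9)" unfolding power2_eq_square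
      by (intro mult_left_mono) auto
    then have "norm c ^ 3 \<le> norm c * (4/9)" by (simp add: power2_eq_square power3_eq_cube)
    moreover have "R^3 = 27/8 * norm c ^ 3" unfolding R_def by (simp add: power3_eq_cube)
    ultimately show ?thesis unfolding R_def by linarith
  qed
  define T where "T u = c + u^3/3" for u :: complex
  have "continuous_on (cball 0 R) T" unfolding T_def by (intro continuous_intros) auto
  moreover have "T \<in> cball 0 R \<rightarrow> cball 0 R"
  proof
    fix u :: complex assume "u \<in> cball 0 R"
    then have nu: "norm u \<le> R" by simp
    have "norm (T u) \<le> norm c + norm u ^3 / 3"
      unfolding T_def using norm_triangle_ineq[of c "u^3/3"] by (simp add: norm_power norm_divide)
    also have "\<dots> \<le> norm c + R^3/3" using nu by (simp add: power_mono)
    finally show "T u \<in> cball 0 R" using key by simp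
  qed
  ultimately obtain u where u: "u \<in> cball 0 R" "T u = u"
    using brouwer_ball[OF R0] by blast
  have "phiNe u = 1 + c" using u(2) unfolding phiNe_def T_def by (simp add: algebra_simps)
  moreover have "u \<in> ball 0 1" using u(1) R1 by simp
  ultimately show ?thesis unfolding OmegaNe_def by (metis image_eqI)
qed

lemma Re_pos_slit: "Re w > 0 \<Longrightarrow> w \<notin> \<real>\<^sub>\<le>\<^sub>0"
  by (auto simp: complex_nonpos_Reals_iff)

lemma Re_one_minus_pow:
  fixes z :: complex
  assumes "z \<in> ball 0 1" "n \<ge> 1"
  shows "Re (1 - z^n) > 0"
proof -
  have "Re (z^n) \<le> norm (z^n)" by (rule complex_Re_le_cmod)
  also have "\<dots> = norm z ^ n" by (simp add: norm_power)
  also have "\<dots> \<le> 1" using assms by (simp add: power_le_one)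
  finally have a: "Re (z^n) \<le> 1" .
  have "Re (z^n) \<noteq> 1 \<or> n = 0"
  proof (cases "n = 0")
    case False
    have "norm z ^ n < 1" using assms False by (simp add: power_less_one_iff)
    then show ?thesis using complex_Re_le_cmod[of "z^n"] by (auto simp: norm_power)
  qed simp
  then show ?thesis using a assms(2)
    by auto
qed

lemma ext_deriv:
  fixes z e :: complex
  assumes "z \<in> ball 0 1" "n \<ge> 1"
  shows "((\<lambda>z. z * (1 - z ^ n) powr e) has_field_derivative
     ((1 - z^n) powr e + z * (e * (1 - z^n) powr e / (1 - z^n) * (- (of_nat n * z^(n-1)))))) (at z)"
proof -
  have slit: "1 - z^n \<notin> \<real>\<^sub>\<le>\<^sub>0" using Re_pos_slit Re_one_minus_pow assms by blast
  then have nz: "1 - z^n \<noteq> 0" by auto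
  have pw: "(1 - z^n) powr (e - 1) = (1 - z^n) powr e / (1 - z^n)"
    using nz by (simp add: powr_def left_diff_distrib exp_diff)
  show ?thesis using slit
    by (auto intro!: derivative_eq_intros simp: pw)
qed

lemma ext_nz:
  fixes z e :: complex
  assumes "z \<in> ball 0 1" "n \<ge> 1" "z \<noteq> 0"
  shows "z * (1 - z ^ n) powr e \<noteq> 0"
proof -
  have "1 - z^n \<noteq> 0" using Re_one_minus_pow[OF assms(1,2)] by auto
  then show ?thesis using assms(3) by (simp add: powr_def)
qed

lemma ext_Qf:
  fixes z e :: complex
  assumes "z \<in> ball 0 1" "n \<ge> 1"
  shows "Qf (\<lambda>z. z * (1 - z ^ n) powr e) z = 1 - e * of_nat n * z^n / (1 - z^n)"
proof (cases "z = 0")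
  case True then show ?thesis using assms(2) by (simp add: Qf_def)
next
  case False
  have nz: "1 - z^n \<noteq> 0" using Re_one_minus_pow[OF assms(1,2)] by auto
  have Pnz: "(1 - z^n) powr e \<noteq> 0" using nz by (simp add: powr_def)
  have e: "z * z^(n-1) = z^n" using assms(2) by (metis Suc_diff_le diff_Suc_1 power_Suc)
  have "deriv (\<lambda>z. z * (1 - z ^ n) powr e) z =
     (1 - z^n) powr e + z * (e * (1 - z^n) powr e / (1 - z^n) * (- (of_nat n * z^(n-1))))"
    using ext_deriv[OF assms] by (rule DERIV_imp_deriv)
  then have "Qf (\<lambda>z. z * (1 - z ^ n) powr e) z =
     z * ((1 - z^n) powr e + z * (e * (1 - z^n) powr e / (1 - z^n) * (- (of_nat n * z^(n-1)))))
      / (z * (1 - z ^ n) powr e)"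
    using False by (simp add: Qf_def)
  also have "\<dots> = 1 - e * of_nat n * (z * z^(n-1)) / (1 - z^n)"
    using False nz Pnz by (simp add: field_simps)
  finally show ?thesis using e by simp
qed

lemma Re_bound_u:
  fixes u :: complex and b :: real
  assumes "norm u < 1" "b > 0"
  shows "Re (1 - complex_of_real b * u / (1 - u)) < 1 + b / 2"
proof -
  define v where "v = 1 - u"
  have vnz: "v \<noteq> 0" using assms(1) v_def by auto
  have "(norm u)^2 < 1" using assms(1) by (simp add: power_less_one_iff)
  then have "(1 - Re v)^2 + (Im v)^2 < 1" unfolding v_def cmod_power2 by simp
  then have lt: "(Re v)^2 + (Im v)^2 < 2 * Re v" by (simp add: power2_eq_square algebra_simps)
  have nv: "(norm v)^2 = (Re v)^2 + (Im v)^2" by (rule cmod_power2)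
  have nvp: "(norm v)^2 > 0" using vnz by simp
  have "complex_of_real b * u / (1 - u) = complex_of_real b * (1 / v - 1)"
    using vnz unfolding v_def by (simp add: field_simps)
  moreover have "Re (1 / v) = Re v / (norm v)^2" by (simp add: Re_divide nv)
  ultimately have "Re (complex_of_real b * u / (1 - u)) = b * (Re v / (norm v)^2 - 1)"
    by simp
  moreover have "Re v / (norm v)^2 > 1/2"
    using lt nvp nv by (simp add: field_simps)
  ultimately have h1: "Re (complex_of_real b * u / (1 - u)) = b * (Re v / (norm v)^2) - b"
    and h2: "Re v / (norm v)^2 > 1/2" by (simp_all add: right_diff_distrib)
  have "b * (Re v / (norm v)^2) > b * (1/2)"
    using h2 assms(2) by (intro mult_strict_left_mono) auto
  with h1 have "Re (complex_of_real b * u / (1 - u)) > - b / 2"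
    by linarith
  then show ?thesis by simp
qed

lemma ext_A:
  fixes e :: complex
  assumes "n \<ge> 1"
  shows "(\<lambda>z. z * (1 - z ^ n) powr e) \<in> A_class n"
proof -
  have hol: "(\<lambda>z. z * (1 - z ^ n) powr e) holomorphic_on ball 0 1"
    using Re_pos_slit Re_one_minus_pow[OF _ assms]
    by (intro holomorphic_intros) auto
  define a where "a k = (if k \<ge> 1 \<and> n dvd (k-1) then (e gchoose ((k-1) div n)) * (-1)^((k-1) div n) else 0)" for k
  have n0: "n > 0" using assms by simp
  have ag: "a (n*j+1) = (e gchoose j) * (-1)^j" for j
    using n0 by (simp add: a_def)
  have a0: "a 0 = 0" by (simp add: a_def)
  have a1: "a 1 = 1" by (simp add: a_def)
  have ak: "\<forall>k. 2 \<le> k \<and> k \<le> n \<longrightarrow> a k = 0"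
  proof (intro allI impI)
    fix k assume k: "2 \<le> k \<and> k \<le> n"
    then have "\<not> n dvd (k - 1)" using dvd_imp_le[of n "k-1"] by auto
    then show "a k = 0" by (simp add: a_def)
  qed
  have sm: "strict_mono (\<lambda>j. n*j+1)" using n0 by (auto simp: strict_mono_def)
  have as: "\<forall>z \<in> ball 0 1. (\<lambda>k. a k * z ^ k) sums (z * (1 - z ^ n) powr e)"
  proof
    fix z :: complex assume z: "z \<in> ball 0 1"
    have "norm (- (z^n)) < 1" using z n0 by (simp add: norm_power power_less_one_iff)
    from gen_binomial_complex[OF this, of e]
    have "(\<lambda>j. z * ((e gchoose j) * (- (z^n))^j)) sums (z * (1 - z ^ n) powr e)"
      by (intro sums_mult) simp
    moreover have "(\<lambda>j. z * ((e gchoose j) * (- (z^n))^j)) = (\<lambda>j. a (n*j+1) * z^(n*j+1))"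
    proof (rule ext)
      fix j
      have p: "z^(n*j+1) = z * (z^n)^j" by (simp add: power_mult)
      have m: "(- (z^n))^j = (-1)^j * (z^n)^j" by (rule power_minus)
      show "z * ((e gchoose j) * (- (z^n))^j) = a (n*j+1) * z^(n*j+1)"
        unfolding ag p m by (simp only: mult_ac)
    qed
    ultimately have "(\<lambda>j. a (n*j+1) * z^(n*j+1)) sums (z * (1 - z ^ n) powr e)" by simp
    then show "(\<lambda>k. a k * z ^ k) sums (z * (1 - z ^ n) powr e)"
    proof (subst sums_mono_reindex[OF sm, symmetric])
      fix k assume "k \<notin> range (\<lambda>j. n*j+1)"
      then have "\<not> (k \<ge> 1 \<and> n dvd (k-1))"
        by (metis (no_types, lifting) dvdE le_add_diff_inverse2 rangeI)
      then have "a k = 0" unfolding a_def by auto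
      then show "a k * z ^ k = 0" by simp
    qed simp
  qed
  show ?thesis unfolding A_class_def using hol a0 a1 ak as by blast
qed

lemma ext_M:
  assumes "n \<ge> 1" "\<beta> > 1"
  shows "(\<lambda>z::complex. z * (1 - z ^ n) powr complex_of_real (2 * (\<beta> - 1) / real n)) \<in> M_class n \<beta>"
proof -
  define e where "e = complex_of_real (2 * (\<beta> - 1) / real n)"
  have en: "e * of_nat n = complex_of_real (2 * (\<beta> - 1))"
    using assms(1) unfolding e_def by (simp add: field_simps)
  have "Re (Qf (\<lambda>z. z * (1 - z ^ n) powr e) z) < \<beta>" if z: "z \<in> ball 0 1" for z
  proof -
    have "Qf (\<lambda>z. z * (1 - z ^ n) powr e) z = 1 - complex_of_real (2 * (\<beta> - 1)) * z^n / (1 - z^n)"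
      using ext_Qf[OF z assms(1)] en by simp
    moreover have "norm (z^n) < 1" using z assms(1) by (simp add: norm_power power_less_one_iff)
    ultimately show ?thesis using Re_bound_u[of "z^n" "2 * (\<beta> - 1)"] assms(2) by simp
  qed
  then show ?thesis
    unfolding M_class_def e_def[symmetric] using ext_A[OF assms(1)] ext_nz[OF _ assms(1)] by auto
qed

lemma third_not_in: "(1/3 :: complex) \<notin> OmegaNe"
proof
  assume "(1/3 :: complex) \<in> OmegaNe"
  then obtain u where u: "u \<in> ball 0 1" "phiNe u = 1/3" unfolding OmegaNe_def by auto
  then have "1 + u - u^3/3 = 1/3" by (simp add: phiNe_def)
  then have e: "3 * u^3 = 3 * (2 + 3*u)" by (simp add: field_simps power3_eq_cube)
  have h: "u^3 = 2 + 3*u" using e mult_left_cancel[of "3::complex" "u^3" "2 + 3*u"] by (metis zero_neq_numeral)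
  have "(u + 1)^2 * (u - 2) = u^3 - 3*u - 2" by (simp add: power2_eq_square power3_eq_cube algebra_simps)
  then have "(u + 1)^2 * (u - 2) = 0" using h by simp
  then have "u + 1 = 0 \<or> u - 2 = 0" by simp
  then have "u = -1 \<or> u = 2" by (auto simp: eq_neg_iff_add_eq_0)
  then show False using u(1) by auto
qed

lemma third_in_closure: "(1/3 :: complex) \<in> closure OmegaNe"
proof (subst closure_approachable, intro allI impI)
  fix \<epsilon> :: real assume \<epsilon>: "\<epsilon> > 0"
  define s where "s = min (1/2) (\<epsilon>/2)"
  have s0: "s > 0" "s \<le> 1/2" "s < \<epsilon>" using \<epsilon> by (auto simp: s_def)
  define x where "x = s - 1"
  have "norm (complex_of_real x) = \<bar>x\<bar>" by (rule norm_of_real)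
  then have xin: "complex_of_real x \<in> ball 0 1" using s0 by (simp add: x_def)
  have "phiNe (complex_of_real x) = complex_of_real (1 + x - x^3/3)" by (simp add: phiNe_def)
  also have "1 + x - x^3/3 = 1/3 + (s^2 - s^3/3)"
  proof -
    have "x ^ 3 = s ^ 3 - 3 * (s ^ 2) + 3 * s - 1"
      by (simp add: x_def power2_eq_square power3_eq_cube algebra_simps)
    then show ?thesis unfolding x_def by linarith
  qed
  finally have ph: "phiNe (complex_of_real x) = 1/3 + complex_of_real (s^2 - s^3/3)" by simp
  have b1: "s^2 - s^3/3 \<ge> 0" using s0 by (simp add: power2_eq_square power3_eq_cube mult_le_cancel_left1 field_simps)
  have b2: "s^2 - s^3/3 < \<epsilon>"
  proof -
    have "s^3 \<ge> 0" using s0 by simp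
    moreover have "s^2 \<le> s * (1/2)" using s0 by (simp add: power2_eq_square mult_left_mono)
    ultimately show ?thesis using s0 by linarith
  qed
  define w where "w = s^2 - s^3/3"
  have "dist (phiNe (complex_of_real x)) (1/3) = norm (complex_of_real w)"
    unfolding ph dist_norm w_def[symmetric] by simp
  also have "\<dots> = \<bar>w\<bar>" by (rule norm_of_real)
  finally have "dist (phiNe (complex_of_real x)) (1/3) < \<epsilon>"
    using b1 b2 unfolding w_def by simp
  then show "\<exists>y\<in>OmegaNe. dist y (1/3) < \<epsilon>" using xin unfolding OmegaNe_def by blast
qed

lemma third_frontier: "(1/3 :: complex) \<in> frontier OmegaNe"
  unfolding frontier_def using third_in_closure third_not_in interior_subset by blast

lemma r0_facts:
  assumes "n \<ge> 1" "\<beta> > 1"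
  shows "(3 * \<beta> - 2) powr (- 1 / real n) > 0" "(3 * \<beta> - 2) powr (- 1 / real n) < 1"
    "((3 * \<beta> - 2) powr (- 1 / real n)) ^ n = 1 / (3 * \<beta> - 2)"
proof -
  have b: "3 * \<beta> - 2 > 1" using assms by simp
  show "(3 * \<beta> - 2) powr (- 1 / real n) > 0" using b by simp
  show "(3 * \<beta> - 2) powr (- 1 / real n) < 1"
    using b assms(1) by (intro powr_less_one) auto
  have "((3 * \<beta> - 2) powr (- 1 / real n)) ^ n = ((3 * \<beta> - 2) powr (- 1 / real n)) powr (real n)"
    using b by (simp add: powr_realpow)
  also have "\<dots> = (3 * \<beta> - 2) powr (- 1)"
    using assms(1) by (simp add: powr_powr)
  also have "\<dots> = 1 / (3 * \<beta> - 2)" using b by (simp add: powr_minus divide_inverse)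
  finally show "((3 * \<beta> - 2) powr (- 1 / real n)) ^ n = 1 / (3 * \<beta> - 2)" .
qed

theorem mainTheorem12:
  fixes n :: nat and \<beta> :: real
  assumes "n \<ge> 1" and "\<beta> > 1"
  shows "radius_Ne (M_class n \<beta>) = (3 * \<beta> - 2) powr (- 1 / real n)
    \<and> (let f = (\<lambda>z::complex. z * (1 - z ^ n) powr complex_of_real (2 * (\<beta> - 1) / real n))
       in f \<in> M_class n \<beta> \<and>
          Qf f ` sphere 0 ((3 * \<beta> - 2) powr (- 1 / real n)) \<inter> frontier OmegaNe \<noteq> {})"
proof -
  define r0 where "r0 = (3 * \<beta> - 2) powr (- 1 / real n)"
  define e where "e = complex_of_real (2 * (\<beta> - 1) / real n)"
  define F where "F = (\<lambda>z::complex. z * (1 - z ^ n) powr e)"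
  have r0p: "r0 > 0" and r01: "r0 < 1" and r0n: "r0 ^ n = 1 / (3 * \<beta> - 2)"
    using r0_facts[OF assms] unfolding r0_def by auto
  have FM: "F \<in> M_class n \<beta>" using ext_M[OF assms] unfolding F_def e_def .
  have b: "3 * \<beta> - 2 > 1" using assms by simp
  have Q3: "Qf F (complex_of_real r0) = 1/3"
  proof -
    have zin: "complex_of_real r0 \<in> ball 0 1" using r0p r01 by simp
    have en: "e * of_nat n = complex_of_real (2 * (\<beta> - 1))"
      using assms(1) unfolding e_def by (simp add: field_simps)
    define t where "t = 1 / (3 * \<beta> - 2)"
    have t1: "t < 1" "t > 0" using b by (auto simp: t_def)
    have "Qf F (complex_of_real r0) = 1 - complex_of_real (2 * (\<beta> - 1)) * complex_of_real t / (1 - complex_of_real t)"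
      using ext_Qf[OF zin assms(1), of e] en r0n unfolding F_def t_def
      by (simp flip: of_real_power)
    also have "\<dots> = complex_of_real (1 - 2 * (\<beta> - 1) * t / (1 - t))" by simp
    also have "1 - 2 * (\<beta> - 1) * t / (1 - t) = 1/3"
    proof -
      have "1 - t = 3 * (\<beta> - 1) / (3 * \<beta> - 2)" using b unfolding t_def by (simp add: field_simps)
      then have "t / (1 - t) = 1 / (3 * (\<beta> - 1))" using b assms(2) unfolding t_def by simp
      then have "2 * (\<beta> - 1) * t / (1 - t) = 2 * (\<beta> - 1) / (3 * (\<beta> - 1))"
        by (metis times_divide_eq_right mult.right_neutral)
      also have "\<dots> = 2/3" using assms(2) mult_divide_mult_cancel_right[of "\<beta> - 1" 2 3] by simp
      finally show ?thesis by simp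
    qed
    finally show ?thesis by simp
  qed
  have P: "r0 \<in> {0<..1} \<and> (\<forall>f \<in> M_class n \<beta>. Qf f ` ball 0 r0 \<subseteq> OmegaNe)"
  proof (intro conjI ballI subsetI)
    show "r0 \<in> {0<..1}" using r0p r01 by simp
    fix f w assume f: "f \<in> M_class n \<beta>" and w: "w \<in> Qf f ` ball 0 r0"
    then obtain z where z: "z \<in> ball 0 r0" "w = Qf f z" by auto
    have z1: "z \<in> ball 0 1" using z r01 by simp
    define t where "t = norm z ^ n"
    have tlt: "t < 1 / (3 * \<beta> - 2)" unfolding t_def r0n[symmetric]
      using z(1) assms(1) by (intro power_strict_mono) auto
    have t0: "t \<ge> 0" by (simp add: t_def)
    have tb: "t * (3 * \<beta> - 2) < 1" using tlt b by (simp add: field_simps)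
    have t1: "1 - t > 0" using tlt b by (simp add: field_simps) (smt (verit) tb t0 b mult_le_cancel_left1)
    have bd: "norm (Qf f z - 1) * (1 - t) \<le> (2*\<beta>-2) * t"
      using M_bound[OF f assms(1,2) z1] unfolding t_def .
    have "(2*\<beta>-2) * t < 2/3 * (1 - t)" using tb by (simp add: algebra_simps)
    then have "norm (Qf f z - 1) * (1 - t) < 2/3 * (1 - t)" using bd by linarith
    then have "norm (Qf f z - 1) < 2/3" using t1 by (meson less_le mult_right_less_imp_less)
    from disk_in_Omega[OF this] show "w \<in> OmegaNe" using z(2) by simp
  qed
  have ub: "y \<le> r0" if "y \<in> {0<..1} \<and> (\<forall>f \<in> M_class n \<beta>. Qf f ` ball 0 y \<subseteq> OmegaNe)" for y
  proof (rule ccontr)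
    assume "\<not> y \<le> r0"
    then have "complex_of_real r0 \<in> ball 0 y" using r0p by simp
    then have "Qf F (complex_of_real r0) \<in> OmegaNe" using that FM by blast
    then show False using Q3 third_not_in by simp
  qed
  have rad: "radius_Ne (M_class n \<beta>) = r0"
    unfolding radius_Ne_def by (rule Greatest_equality) (use P ub in auto)
  have "Qf F (complex_of_real r0) \<in> Qf F ` sphere 0 r0" using r0p by simp
  then have "Qf F ` sphere 0 r0 \<inter> frontier OmegaNe \<noteq> {}" using Q3 third_frontier by auto
  then show ?thesis using rad FM unfolding r0_def F_def e_def Let_def by simp
qed

end
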